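(* Grant (Lip-Conv), (Conv) and (Bern-ERM), let $\theta=1/(2A)$, and consider the event $$\Omega=\Big\{\forall f\in F\text{ with }\|f-f^*\|_{L_2}\le r_2(\theta):\ |(P-P_N)\mathcal L_f|\le\theta r_2^2(\theta)\Big\}.$$ On $\Omega$, any $\hat f^{ERM}\in\operatorname{argmin}_{f\in F}P_N\ell_f$ satisfies $\|\hat f^{ERM}-f^*\|_{L_2}\le r_2(\theta)$ and $P\mathcal L_{\hat f^{ERM}}\le\theta r_2^2(\theta)$.
   Context: Setting: $\bar{\mathcal Y}\subset\mathbb R$ convex, $F\subset L_2(\mu)$ a class of measurable functions $\mathcal X\to\bar{\mathcal Y}$, $\ell_f(x,y)=\bar\ell(f(x),y)$, $(X,Y)\sim P$, $X\sim\mu$, $Pg=\mathbb Eg(X,Y)$; $f^*$ is the unique minimizer of $f\mapsto P\ell_f$ over $F$, $\mathcal L_f=\ell_f-\ell_{f^*}$, $\|g\|_{L_2}=(\mathbb Eg(X)^2)^{1/2}$. Data $(X_i,Y_i)_{i=1}^N$, $P_Ng=\frac1N\sum_{i=1}^Ng(X_i,Y_i)$. (Lip-Conv): there is $L>0$ with $u\mapsto\bar\ell(u,y)$ convex and $L$-Lipschitz for every $y$. (Conv): $F$ convex. $r_2(\theta)$ is a given positive number (the complexity parameter, $r_2(\theta)\ge\inf\{r>0:32L\,w((F-f^* )\cap rB_{L_2})\le\theta r^2\sqrt N\}$, $w$ the Gaussian mean width). (Bern-ERM): there is $A>0$ such that every $f\in F$ with $\|f-f^*\|_{L_2}=r_2(1/(2A))$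 satisfies $\|f-f^*\|_{L_2}^2\le AP\mathcal L_f$. *)

theory Defs
  imports "HOL-Probability.Probability"
begin

definition Pexp :: "('x \<times> real) measure \<Rightarrow> ('x \<times> real \<Rightarrow> real) \<Rightarrow> real" where
  "Pexp P g = integral\<^sup>L P g"

definition PN :: "nat \<Rightarrow> (nat \<Rightarrow> 'x \<times> real) \<Rightarrow> ('x \<times> real \<Rightarrow> real) \<Rightarrow> real" where
  "PN N Z g = (\<Sum>i<N. g (Z i)) / real N"

definition loss :: "(real \<Rightarrow> real \<Rightarrow> real) \<Rightarrow> ('x \<Rightarrow> real) \<Rightarrow> 'x \<times> real \<Rightarrow> real" where
  "loss lb f z = lb (f (fst z)) (snd z)"

definition excess_loss :: "(real \<Rightarrow> real \<Rightarrow> real) \<Rightarrow> ('x \<Rightarrow> real) \<Rightarrow> ('x \<Rightarrow> real) \<Rightarrow> 'x \<times> real \<Rightarrow> real" where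
  "excess_loss lb fs f z = loss lb f z - loss lb fs z"

definition L2norm :: "('x \<times> real) measure \<Rightarrow> ('x \<Rightarrow> real) \<Rightarrow> real" where
  "L2norm P g = sqrt (integral\<^sup>L P (\<lambda>z. (g (fst z))\<^sup>2))"

end

theory Submission
  imports Defs
begin

theorem proposition3:
  fixes P :: "('x \<times> real) measure"
    and F :: "('x \<Rightarrow> real) set"
    and Ybar :: "real set"
    and lb :: "real \<Rightarrow> real \<Rightarrow> real"
    and fs :: "'x \<Rightarrow> real"
    and L A :: real
    and r2 :: "real \<Rightarrow> real"
    and N :: nat
    and Z :: "nat \<Rightarrow> 'x \<times> real"
    and fhat :: "'x \<Rightarrow> real"
    and \<theta> :: real
  assumes prob: "prob_space P"
    and Ybar_convex: "convex Ybar"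
    and F_range: "\<forall>f\<in>F. \<forall>x. f x \<in> Ybar"
    and F_meas: "\<forall>f\<in>F. (\<lambda>z. f (fst z)) \<in> borel_measurable P"
    and F_L2: "\<forall>f\<in>F. integrable P (\<lambda>z. (f (fst z))\<^sup>2)"
    and loss_int: "\<forall>f\<in>F. integrable P (loss lb f)"
    and fs_in: "fs \<in> F"
    and fs_min: "\<forall>f\<in>F. Pexp P (loss lb fs) \<le> Pexp P (loss lb f)"
    and fs_unique: "\<forall>f\<in>F. Pexp P (loss lb f) \<le> Pexp P (loss lb fs) \<longrightarrow> f = fs"
    and LipConv_L: "L > 0"
    and LipConv_convex: "\<forall>y. convex_on Ybar (\<lambda>u. lb u y)"
    and LipConv_lip: "\<forall>y. \<forall>u\<in>Ybar. \<forall>v\<in>Ybar. \<bar>lb u y - lb v y\<bar> \<le> L * \<bar>u - v\<bar>"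
    and Conv: "\<forall>f\<in>F. \<forall>g\<in>F. \<forall>t::real. 0 \<le> t \<and> t \<le> 1 \<longrightarrow> (\<lambda>x. (1 - t) * f x + t * g x) \<in> F"
    and r2_pos: "\<forall>t. r2 t > 0"
    and A_pos: "A > 0"
    and Bern_ERM: "\<forall>f\<in>F. L2norm P (\<lambda>x. f x - fs x) = r2 (1 / (2 * A)) \<longrightarrow>
                    (L2norm P (\<lambda>x. f x - fs x))\<^sup>2 \<le> A * Pexp P (excess_loss lb fs f)"
    and theta_def: "\<theta> = 1 / (2 * A)"
    and N_pos: "N > 0"
    and Omega: "\<forall>f\<in>F. L2norm P (\<lambda>x. f x - fs x) \<le> r2 \<theta> \<longrightarrow>
                 \<bar>Pexp P (excess_loss lb fs f) - PN N Z (excess_loss lb fs f)\<bar> \<le> \<theta> * (r2 \<theta>)\<^sup>2"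
    and fhat_in: "fhat \<in> F"
    and fhat_ERM: "\<forall>f\<in>F. PN N Z (loss lb fhat) \<le> PN N Z (loss lb f)"
  shows "L2norm P (\<lambda>x. fhat x - fs x) \<le> r2 \<theta> \<and> Pexp P (excess_loss lb fs fhat) \<le> \<theta> * (r2 \<theta>)\<^sup>2"
proof -
  define r where "r = r2 \<theta>"
  define d where "d = L2norm P (\<lambda>x. fhat x - fs x)"
  have rpos: "r > 0" using r2_pos r_def by auto
  have thpos: "\<theta> > 0" using A_pos theta_def by simp
  have PNex: "PN N Z (excess_loss lb fs g) = PN N Z (loss lb g) - PN N Z (loss lb fs)" for g
    unfolding PN_def excess_loss_def by (simp add: sum_subtractf diff_divide_distrib)
  have hat_le: "PN N Z (excess_loss lb fs fhat) \<le> 0"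
    using PNex fhat_ERM fs_in by auto
  have dle: "d \<le> r"
  proof (rule ccontr)
    assume "\<not> d \<le> r"
    hence dr: "d > r" by simp
    define t where "t = r / d"
    have t0: "0 \<le> t" and t1: "t \<le> 1" using dr rpos by (auto simp: t_def)
    define f where "f = (\<lambda>x. (1 - t) * fs x + t * fhat x)"
    have fF: "f \<in> F" using Conv fs_in fhat_in t0 t1 f_def by blast
    have fdiff: "(\<lambda>x. f x - fs x) = (\<lambda>x. t * (fhat x - fs x))"
      by (auto simp: f_def algebra_simps)
    have "L2norm P (\<lambda>x. f x - fs x) = sqrt (t\<^sup>2 * integral\<^sup>L P (\<lambda>z. (fhat (fst z) - fs (fst z))\<^sup>2))"
      unfolding fdiff L2norm_def by (simp add: power_mult_distrib)
    also have "\<dots> = t * d" using t0 by (simp add: real_sqrt_mult d_def L2norm_def)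
    also have "\<dots> = r" using dr rpos by (simp add: t_def)
    finally have nf: "L2norm P (\<lambda>x. f x - fs x) = r" .
    have "r\<^sup>2 \<le> A * Pexp P (excess_loss lb fs f)"
      using Bern_ERM fF nf theta_def r_def by metis
    hence PL: "Pexp P (excess_loss lb fs f) \<ge> 2 * \<theta> * r\<^sup>2"
    proof -
      have "2 * \<theta> * r\<^sup>2 = r\<^sup>2 / A" using A_pos theta_def by simp
      also have "\<dots> \<le> Pexp P (excess_loss lb fs f)"
        using \<open>r\<^sup>2 \<le> A * Pexp P (excess_loss lb fs f)\<close> A_pos by (simp add: pos_divide_le_eq mult.commute)
      finally show ?thesis .
    qed
    have Om: "\<bar>Pexp P (excess_loss lb fs f) - PN N Z (excess_loss lb fs f)\<bar> \<le> \<theta> * r\<^sup>2"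
      using Omega fF nf r_def by auto
    have pt: "excess_loss lb fs f z \<le> t * excess_loss lb fs fhat z" for z
    proof -
      have a: "fs (fst z) \<in> Ybar" "fhat (fst z) \<in> Ybar" using F_range fs_in fhat_in by auto
      have "lb (f (fst z)) (snd z) \<le> (1 - t) * lb (fs (fst z)) (snd z) + t * lb (fhat (fst z)) (snd z)"
        using convex_onD[OF LipConv_convex[rule_format, of "snd z"], OF t0 t1 a] by (simp add: f_def)
      thus ?thesis by (simp add: excess_loss_def loss_def algebra_simps)
    qed
    have "PN N Z (excess_loss lb fs f) \<le> t * PN N Z (excess_loss lb fs fhat)"
    proof -
      have "(\<Sum>i<N. excess_loss lb fs f (Z i)) \<le> t * (\<Sum>i<N. excess_loss lb fs fhat (Z i))"
        unfolding sum_distrib_left by (rule sum_mono) (rule pt)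
      thus ?thesis unfolding PN_def using N_pos by (simp add: divide_right_mono)
    qed
    also have "\<dots> \<le> 0" using t0 hat_le by (simp add: mult_nonneg_nonpos)
    finally have "PN N Z (excess_loss lb fs f) \<le> 0" .
    moreover have "\<theta> * r\<^sup>2 > 0" using thpos rpos by simp
    ultimately show False using PL Om by linarith
  qed
  have "\<bar>Pexp P (excess_loss lb fs fhat) - PN N Z (excess_loss lb fs fhat)\<bar> \<le> \<theta> * r\<^sup>2"
    using Omega fhat_in dle d_def r_def by auto
  thus ?thesis using dle hat_le d_def r_def by auto
qed

end
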